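(* For $\ell=0,1,\ldots,N$, and real $x\in\mathbb{R}^N$, $y\in\mathbb{R}^{N-\ell}$ with pairwise distinct coordinates, $$\big(H_{\rm nr}(x_1,\ldots,x_N)-H_{\rm nr}(y_1,\ldots,y_{N-\ell})\big)\Psi_{\ell,\rm nr}(x,y)=-\frac{\mu^2g^2}{24}\ell(4\ell^2-1)\Psi_{\ell,\rm nr}(x,y),$$ where $\Psi_{\ell,\rm nr}(x,y)=W_{\rm nr}(x)^{1/2}W_{\rm nr}(y)^{1/2}\mathcal{K}_\ell(x,y)$ and $$\mathcal{K}_\ell(x,y)=\frac{\exp\big(\frac{\mu g\ell}{2\hbar}\big(\sum_{n=1}^{N-\ell}y_n-\sum_{m=1}^Nx_m\big)\big)}{\prod_{m=1}^N\prod_{n=1}^{N-\ell}[2\cosh(\mu(x_m-y_n)/2)]^{g/\hbar}}.$$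
   Context: Fix $\hbar,\mu,g>0$. For $n$ variables, $H_{\rm nr}(x_1,\ldots,x_n)=-\frac{\hbar^2}{2}\sum_{j=1}^n\partial_{x_j}^2+g(g-\hbar)\sum_{1\le j<l\le n}\frac{\mu^2}{4\sinh^2(\mu(x_j-x_l)/2)}$ (for $n=0$ this is $0$), and $W_{\rm nr}(x)^{1/2}=\prod_{1\le j<k\le n}\big(4\sinh^2(\mu(x_j-x_k)/2)\big)^{g/(2\hbar)}$ with positive real powers. *)

theory Defs
  imports "HOL-Analysis.Analysis"
begin

text \<open>Points of R^n are represented as functions nat => real; only the
coordinates 0..n-1 (i.e. indices < n) are relevant.\<close>

definition partial2 :: "((nat \<Rightarrow> real) \<Rightarrow> real) \<Rightarrow> (nat \<Rightarrow> real) \<Rightarrow> nat \<Rightarrow> real" where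
  "partial2 f x j = deriv (\<lambda>t. deriv (\<lambda>s. f (x(j := s))) t) (x j)"

definition H_nr :: "real \<Rightarrow> real \<Rightarrow> real \<Rightarrow> nat \<Rightarrow> ((nat \<Rightarrow> real) \<Rightarrow> real) \<Rightarrow> (nat \<Rightarrow> real) \<Rightarrow> real" where
  "H_nr hbar mu g n f x =
     - (hbar ^ 2 / 2) * (\<Sum>j<n. partial2 f x j)
     + g * (g - hbar) * (\<Sum>j<n. \<Sum>l\<in>{Suc j..<n}. mu ^ 2 / (4 * (sinh (mu * (x j - x l) / 2)) ^ 2)) * f x"

definition W_nr_sqrt :: "real \<Rightarrow> real \<Rightarrow> real \<Rightarrow> nat \<Rightarrow> (nat \<Rightarrow> real) \<Rightarrow> real" where
  "W_nr_sqrt hbar mu g n x =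
     (\<Prod>j<n. \<Prod>k\<in>{Suc j..<n}. (4 * (sinh (mu * (x j - x k) / 2)) ^ 2) powr (g / (2 * hbar)))"

definition K_kernel :: "real \<Rightarrow> real \<Rightarrow> real \<Rightarrow> nat \<Rightarrow> nat \<Rightarrow> (nat \<Rightarrow> real) \<Rightarrow> (nat \<Rightarrow> real) \<Rightarrow> real" where
  "K_kernel hbar mu g N l x y =
     exp (mu * g * real l / (2 * hbar) * ((\<Sum>n<N - l. y n) - (\<Sum>m<N. x m)))
     / (\<Prod>m<N. \<Prod>n<N - l. (2 * cosh (mu * (x m - y n) / 2)) powr (g / hbar))"

definition Psi_nr :: "real \<Rightarrow> real \<Rightarrow> real \<Rightarrow> nat \<Rightarrow> nat \<Rightarrow> (nat \<Rightarrow> real) \<Rightarrow> (nat \<Rightarrow> real) \<Rightarrow> real" where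
  "Psi_nr hbar mu g N l x y =
     W_nr_sqrt hbar mu g N x * W_nr_sqrt hbar mu g (N - l) y * K_kernel hbar mu g N l x y"

end

theory Submission
  imports Defs
begin


lemma sinh_exp2: "sinh (a - b :: real) = (exp (2*a) - exp (2*b)) / (2 * exp a * exp b)"
proof -
  have e: "exp (2*a) = exp a * exp a" "exp (2*b) = exp b * exp b"
    by (simp_all add: exp_add[symmetric])
  show ?thesis unfolding sinh_def e by (simp add: exp_diff exp_minus field_simps)
qed

lemma cosh_exp2: "cosh (a - b :: real) = (exp (2*a) + exp (2*b)) / (2 * exp a * exp b)"
proof -
  have e: "exp (2*a) = exp a * exp a" "exp (2*b) = exp b * exp b"
    by (simp_all add: exp_add[symmetric])
  show ?thesis unfolding cosh_def e by (simp add: exp_diff exp_minus field_simps)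
qed

lemma divdiv_same: "(k::real) \<noteq> 0 \<Longrightarrow> (p/k)/(q/k) = p/q" by (cases "q = 0") (simp_all add: field_simps)

lemma coth_exp2: "cosh (a - b :: real) / sinh (a - b) = (exp (2*a) + exp (2*b)) / (exp (2*a) - exp (2*b))"
  unfolding sinh_exp2 cosh_exp2 by (rule divdiv_same) simp

lemma tanh_exp2: "sinh (a - b :: real) / cosh (a - b) = (exp (2*a) - exp (2*b)) / (exp (2*a) + exp (2*b))"
  unfolding sinh_exp2 cosh_exp2 by (rule divdiv_same) simp

lemma triple_rat:
  fixes A B C :: real
  assumes "A \<noteq> B" "B \<noteq> C" "A \<noteq> C"
  shows "(A+B)/(A-B) * ((A+C)/(A-C)) + (B+C)/(B-C) * ((B+A)/(B-A)) + (C+A)/(C-A) * ((C+B)/(C-B)) = 1"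
proof -
  have h: "A - B \<noteq> 0" "B - C \<noteq> 0" "A - C \<noteq> 0" using assms by auto
  have e1: "B - A = -(A-B)" "C - A = -(A-C)" "C - B = -(B-C)" by auto
  show ?thesis unfolding e1 using h
    apply (simp add: divide_simps)
    apply (simp add: algebra_simps)
    done
qed
lemma mixed_rat:
  fixes A B Y :: real
  assumes "A \<noteq> B" "A > 0" "B > 0" "Y > 0"
  shows "(A+B)/(A-B) * ((A-Y)/(A+Y) - (B-Y)/(B+Y)) + (A-Y)/(A+Y) * ((B-Y)/(B+Y)) = 1"
proof -
  have h: "A - B \<noteq> 0" "A + Y \<noteq> 0" "B + Y \<noteq> 0" using assms by auto
  show ?thesis using h
    apply (simp add: divide_simps)
    apply (simp add: algebra_simps)
    done
qed

lemma exp2_inj: "(a::real) \<noteq> b \<Longrightarrow> exp (2*a) \<noteq> exp (2*b)" by simp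

lemma triple_coth:
  fixes a b c :: real
  assumes "a \<noteq> b" "b \<noteq> c" "a \<noteq> c"
  shows "cosh (a-b)/sinh (a-b) * (cosh (a-c)/sinh (a-c)) + cosh (b-c)/sinh (b-c) * (cosh (b-a)/sinh (b-a))
       + cosh (c-a)/sinh (c-a) * (cosh (c-b)/sinh (c-b)) = 1"
  unfolding coth_exp2 by (rule triple_rat) (use assms in auto)

lemma mixed_coth:
  fixes a b y :: real
  assumes "a \<noteq> b"
  shows "cosh (a-b)/sinh (a-b) * (sinh (a-y)/cosh (a-y) - sinh (b-y)/cosh (b-y)) + sinh (a-y)/cosh (a-y) * (sinh (b-y)/cosh (b-y)) = 1"
  unfolding coth_exp2 tanh_exp2 by (rule mixed_rat) (use assms in auto)



abbreviation dl :: "nat \<Rightarrow> nat \<Rightarrow> real" where "dl a b \<equiv> (if a = b then 1 else 0)"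

lemma sum_anti_zero:
  fixes C :: "nat \<Rightarrow> nat \<Rightarrow> real"
  assumes "\<And>j k. j < N \<Longrightarrow> k < N \<Longrightarrow> C j k = - C k j"
  shows "(\<Sum>j<N. \<Sum>k<N. C j k) = 0"
proof -
  have "(\<Sum>j<N. \<Sum>k<N. C j k) = (\<Sum>k<N. \<Sum>j<N. C j k)" by (rule sum.swap)
  also have "\<dots> = (\<Sum>k<N. \<Sum>j<N. - C k j)" by (rule sum.cong[OF refl], rule sum.cong[OF refl], rule assms) auto
  also have "\<dots> = - (\<Sum>j<N. \<Sum>k<N. C j k)" by (simp add: sum_negf)
  finally show ?thesis by simp
qed

lemma sum_dl1: "j < (N::nat) \<Longrightarrow> (\<Sum>k<N. dl j k * F k) = (F j :: real)"
  by (simp add: if_distrib[of "\<lambda>z. z * F _"] sum.delta cong: if_cong)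
lemma sum_dl2: "j < (N::nat) \<Longrightarrow> (\<Sum>k<N. dl k j * F k) = (F j :: real)"
  by (simp add: if_distrib[of "\<lambda>z. z * F _"] sum.delta' cong: if_cong)
lemma sum_dl0: "j < (N::nat) \<Longrightarrow> (\<Sum>k<N. dl j k) = 1" by simp
lemma sum_dl0': "j < (N::nat) \<Longrightarrow> (\<Sum>k<N. dl k j) = 1" by (simp add: sum.delta')

lemma sum3_delta:
  "(\<Sum>j<N. \<Sum>k<N. \<Sum>k'<(N::nat). dl j k * (f j k' :: real)) = (\<Sum>j<N. \<Sum>k'<N. f j k')"
  "(\<Sum>j<N. \<Sum>k<N. \<Sum>k'<(N::nat). dl k k' * (f j k :: real)) = (\<Sum>j<N. \<Sum>k<N. f j k)"
  "(\<Sum>j<N. \<Sum>k<N. \<Sum>k'<(N::nat). dl j k' * (f j k :: real)) = (\<Sum>j<N. \<Sum>k<N. f j k)"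
proof -
  show "(\<Sum>j<N. \<Sum>k<N. \<Sum>k'<(N::nat). dl j k * (f j k' :: real)) = (\<Sum>j<N. \<Sum>k'<N. f j k')"
    by (rule sum.cong[OF refl]) (simp add: sum_distrib_left[symmetric] sum_dl1)
  show "(\<Sum>j<N. \<Sum>k<N. \<Sum>k'<(N::nat). dl k k' * (f j k :: real)) = (\<Sum>j<N. \<Sum>k<N. f j k)"
    by (intro sum.cong[OF refl]) (simp add: sum_distrib_right[symmetric])
  show "(\<Sum>j<N. \<Sum>k<N. \<Sum>k'<(N::nat). dl j k' * (f j k :: real)) = (\<Sum>j<N. \<Sum>k<N. f j k)"
    by (intro sum.cong[OF refl]) (simp add: sum_distrib_right[symmetric])
qed

lemma sum_dl_facts:
  "(\<Sum>j<N. \<Sum>k<N. \<Sum>k'<(N::nat). dl j k * dl k k') = real N"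
  "(\<Sum>j<N. \<Sum>k<(N::nat). c * dl j k) = c * real N"
proof -
  have "(\<Sum>j<N. \<Sum>k<N. \<Sum>k'<(N::nat). dl j k * dl k k') = (\<Sum>j<N. \<Sum>k<N. dl j k)"
    by (intro sum.cong[OF refl]) (simp add: sum_distrib_left[symmetric])
  also have "\<dots> = real N" by simp
  finally show "(\<Sum>j<N. \<Sum>k<N. \<Sum>k'<(N::nat). dl j k * dl k k') = real N" .
  show "(\<Sum>j<N. \<Sum>k<(N::nat). c * dl j k) = c * real N"
    by (simp add: sum_distrib_left[symmetric])
qed

lemma triple_sum:
  fixes C :: "nat \<Rightarrow> nat \<Rightarrow> real"
  assumes C3: "\<And>j k k'. j < N \<Longrightarrow> k < N \<Longrightarrow> k' < N \<Longrightarrow>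
     C j k * C j k' + C k k' * C k j + C k' j * C k' k
     = 1 - dl j k - dl k k' - dl j k' + 2 * dl j k * dl k k'
       + dl j k * (C j k')\<^sup>2 + dl k k' * (C j k)\<^sup>2 + dl j k' * (C j k)\<^sup>2"
  shows "(\<Sum>j<N. (\<Sum>k<N. C j k)\<^sup>2) = (real N^3 - 3 * real N^2 + 2 * real N)/3 + (\<Sum>j<N. \<Sum>k<N. (C j k)\<^sup>2)"
proof -
  define X where "X = (\<Sum>j<N. \<Sum>k<N. \<Sum>k'<N. C j k * C j k')"
  have X: "(\<Sum>j<N. (\<Sum>k<N. C j k)\<^sup>2) = X"
    unfolding X_def power2_eq_square sum_product by simp
  have X2: "(\<Sum>j<N. \<Sum>k<N. \<Sum>k'<N. C k k' * C k j) = X"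
  proof -
    have "(\<Sum>j<N. \<Sum>k<N. \<Sum>k'<N. C k k' * C k j) = (\<Sum>k<N. \<Sum>j<N. \<Sum>k'<N. C k k' * C k j)"
      by (rule sum.swap)
    also have "\<dots> = (\<Sum>k<N. \<Sum>k'<N. \<Sum>j<N. C k k' * C k j)"
      by (intro sum.cong refl sum.swap)
    also have "\<dots> = X" unfolding X_def by (simp add: mult.commute)
    finally show ?thesis .
  qed
  have X3: "(\<Sum>j<N. \<Sum>k<N. \<Sum>k'<N. C k' j * C k' k) = X"
  proof -
    have "(\<Sum>j<N. \<Sum>k<N. \<Sum>k'<N. C k' j * C k' k) = (\<Sum>j<N. \<Sum>k'<N. \<Sum>k<N. C k' j * C k' k)"
      by (intro sum.cong refl sum.swap)
    also have "\<dots> = (\<Sum>k'<N. \<Sum>j<N. \<Sum>k<N. C k' j * C k' k)"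
      by (rule sum.swap)
    also have "\<dots> = X" unfolding X_def by simp
    finally show ?thesis .
  qed
  have "3 * X = (\<Sum>j<N. \<Sum>k<N. \<Sum>k'<N. C j k * C j k' + C k k' * C k j + C k' j * C k' k)"
    using X2 X3 unfolding X_def by (simp add: sum.distrib)
  also have "\<dots> = (\<Sum>j<N. \<Sum>k<N. \<Sum>k'<N. 1 - dl j k - dl k k' - dl j k' + 2 * dl j k * dl k k'
       + dl j k * (C j k')\<^sup>2 + dl k k' * (C j k)\<^sup>2 + dl j k' * (C j k)\<^sup>2)"
    using C3 by (intro sum.cong refl) auto
  also have "\<dots> = (\<Sum>j<N. \<Sum>k<N. \<Sum>k'<N. (1::real)) - (\<Sum>j<N. \<Sum>k<N. \<Sum>k'<N. dl j k)
      - (\<Sum>j<N. \<Sum>k<N. \<Sum>k'<N. dl k k') - (\<Sum>j<N. \<Sum>k<N. \<Sum>k'<N. dl j k')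
      + 2 * (\<Sum>j<N. \<Sum>k<N. \<Sum>k'<N. dl j k * dl k k')
      + (\<Sum>j<N. \<Sum>k<N. \<Sum>k'<N. dl j k * (C j k')\<^sup>2)
      + (\<Sum>j<N. \<Sum>k<N. \<Sum>k'<N. dl k k' * (C j k)\<^sup>2)
      + (\<Sum>j<N. \<Sum>k<N. \<Sum>k'<N. dl j k' * (C j k)\<^sup>2)"
    by (simp only: sum.distrib sum_subtractf sum_distrib_left mult.assoc)
  also have "\<dots> = real N^3 - 3 * real N^2 + 2 * real N + 3 * (\<Sum>j<N. \<Sum>k<N. (C j k)\<^sup>2)"
    unfolding sum3_delta by (simp add: power3_eq_cube power2_eq_square sum_dl_facts)
  finally have "3 * X = real N ^ 3 - 3 * (real N)\<^sup>2 + 2 * real N + 3 * (\<Sum>j<N. \<Sum>k<N. (C j k)\<^sup>2)" .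
  then show ?thesis unfolding X by (simp add: field_simps)
qed

lemma mixed_x:
  fixes C T :: "nat \<Rightarrow> nat \<Rightarrow> real"
  assumes Tx: "\<And>j k n. j < N \<Longrightarrow> k < N \<Longrightarrow> n < M \<Longrightarrow>
     C j k * T j n + C k j * T k n + T j n * T k n = 1 - dl j k + dl j k * (T j n)\<^sup>2"
  shows "2 * (\<Sum>j<N. (\<Sum>k<N. C j k) * (\<Sum>n<M. T j n)) + (\<Sum>n<M. (\<Sum>j<N. T j n)\<^sup>2)
    = real N ^ 2 * real M - real N * real M + (\<Sum>j<N. \<Sum>n<M. (T j n)\<^sup>2)"
proof -
  define Y where "Y = (\<Sum>j<N. \<Sum>k<N. \<Sum>n<M. C j k * T j n)"
  have Y: "(\<Sum>j<N. (\<Sum>k<N. C j k) * (\<Sum>n<M. T j n)) = Y"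
    unfolding Y_def sum_product by simp
  have Y2: "(\<Sum>j<N. \<Sum>k<N. \<Sum>n<M. C k j * T k n) = Y"
    unfolding Y_def by (rule sum.swap)
  have Z: "(\<Sum>n<M. (\<Sum>j<N. T j n)\<^sup>2) = (\<Sum>j<N. \<Sum>k<N. \<Sum>n<M. T j n * T k n)"
  proof -
    have "(\<Sum>n<M. (\<Sum>j<N. T j n)\<^sup>2) = (\<Sum>n<M. \<Sum>j<N. \<Sum>k<N. T j n * T k n)"
      unfolding power2_eq_square sum_product by simp
    also have "\<dots> = (\<Sum>j<N. \<Sum>n<M. \<Sum>k<N. T j n * T k n)" by (rule sum.swap)
    also have "\<dots> = (\<Sum>j<N. \<Sum>k<N. \<Sum>n<M. T j n * T k n)" by (intro sum.cong refl sum.swap)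
    finally show ?thesis .
  qed
  have "2 * Y + (\<Sum>j<N. \<Sum>k<N. \<Sum>n<M. T j n * T k n)
      = (\<Sum>j<N. \<Sum>k<N. \<Sum>n<M. C j k * T j n + C k j * T k n + T j n * T k n)"
    using Y2 unfolding Y_def by (simp add: sum.distrib)
  also have "\<dots> = (\<Sum>j<N. \<Sum>k<N. \<Sum>n<M. 1 - dl j k + dl j k * (T j n)\<^sup>2)"
    using Tx by (intro sum.cong refl) auto
  also have "\<dots> = (\<Sum>j<N. \<Sum>k<N. \<Sum>n<M. (1::real)) - (\<Sum>j<N. \<Sum>k<N. \<Sum>n<M. dl j k)
        + (\<Sum>j<N. \<Sum>k<N. \<Sum>n<M. dl j k * (T j n)\<^sup>2)"
    by (simp only: sum.distrib sum_subtractf)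
  also have "(\<Sum>j<N. \<Sum>k<N. \<Sum>n<M. dl j k * (T j n)\<^sup>2) = (\<Sum>j<N. \<Sum>n<M. (T j n)\<^sup>2)"
    by (rule sum.cong[OF refl]) (simp add: sum_distrib_left[symmetric] sum_dl1)
  also have "(\<Sum>j<N. \<Sum>k<N. \<Sum>n<M. dl j k) = real N * real M"
    by (simp add: sum_distrib_left[symmetric])
  finally show ?thesis using Y Z by (simp add: power2_eq_square)
qed

lemma mixed_y:
  fixes D T :: "nat \<Rightarrow> nat \<Rightarrow> real"
  assumes Ty: "\<And>n m j. n < M \<Longrightarrow> m < M \<Longrightarrow> j < N \<Longrightarrow>
     D n m * T j n + D m n * T j m - T j n * T j m = - 1 + dl n m - dl n m * (T j n)\<^sup>2"
  shows "2 * (\<Sum>n<M. (\<Sum>m<M. D n m) * (\<Sum>j<N. T j n)) - (\<Sum>j<N. (\<Sum>n<M. T j n)\<^sup>2)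
    = - real N * real M ^ 2 + real N * real M - (\<Sum>j<N. \<Sum>n<M. (T j n)\<^sup>2)"
proof -
  define Y where "Y = (\<Sum>n<M. \<Sum>m<M. \<Sum>j<N. D n m * T j n)"
  have Y: "(\<Sum>n<M. (\<Sum>m<M. D n m) * (\<Sum>j<N. T j n)) = Y"
    unfolding Y_def sum_product by simp
  have Y2: "(\<Sum>n<M. \<Sum>m<M. \<Sum>j<N. D m n * T j m) = Y"
    unfolding Y_def by (rule sum.swap)
  have Z: "(\<Sum>j<N. (\<Sum>n<M. T j n)\<^sup>2) = (\<Sum>n<M. \<Sum>m<M. \<Sum>j<N. T j n * T j m)"
  proof -
    have "(\<Sum>j<N. (\<Sum>n<M. T j n)\<^sup>2) = (\<Sum>j<N. \<Sum>n<M. \<Sum>m<M. T j n * T j m)"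
      unfolding power2_eq_square sum_product by simp
    also have "\<dots> = (\<Sum>n<M. \<Sum>j<N. \<Sum>m<M. T j n * T j m)" by (rule sum.swap)
    also have "\<dots> = (\<Sum>n<M. \<Sum>m<M. \<Sum>j<N. T j n * T j m)" by (intro sum.cong refl sum.swap)
    finally show ?thesis .
  qed
  have "2 * Y - (\<Sum>n<M. \<Sum>m<M. \<Sum>j<N. T j n * T j m)
      = (\<Sum>n<M. \<Sum>m<M. \<Sum>j<N. D n m * T j n + D m n * T j m - T j n * T j m)"
    using Y2 unfolding Y_def by (simp add: sum.distrib sum_subtractf)
  also have "\<dots> = (\<Sum>n<M. \<Sum>m<M. \<Sum>j<N. - 1 + dl n m - dl n m * (T j n)\<^sup>2)"
    using Ty by (intro sum.cong refl) auto
  also have "\<dots> = (\<Sum>n<M. \<Sum>m<M. \<Sum>j<N. (- 1::real)) + (\<Sum>n<M. \<Sum>m<M. \<Sum>j<N. dl n m)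
        - (\<Sum>n<M. \<Sum>m<M. \<Sum>j<N. dl n m * (T j n)\<^sup>2)"
    by (simp only: sum.distrib sum_subtractf)
  also have "(\<Sum>n<M. \<Sum>m<M. \<Sum>j<N. dl n m * (T j n)\<^sup>2) = (\<Sum>n<M. \<Sum>j<N. (T j n)\<^sup>2)"
    by (rule sum.cong[OF refl]) (simp add: sum_distrib_left[symmetric] sum_dl1)
  also have "(\<Sum>n<M. \<Sum>j<N. (T j n)\<^sup>2) = (\<Sum>j<N. \<Sum>n<M. (T j n)\<^sup>2)" by (rule sum.swap)
  also have "(\<Sum>n<M. \<Sum>m<M. \<Sum>j<N. dl n m) = real N * real M"
    by (simp add: sum_distrib_left[symmetric])
  finally show ?thesis using Y Z by (simp add: power2_eq_square)
qed

lemma sq_sum_CS: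
  fixes C S :: "nat \<Rightarrow> nat \<Rightarrow> real"
  assumes "\<And>j k. j < N \<Longrightarrow> k < N \<Longrightarrow> (C j k)\<^sup>2 = S j k + 1 - dl j k"
  shows "(\<Sum>j<N. \<Sum>k<N. (C j k)\<^sup>2) = (\<Sum>j<N. \<Sum>k<N. S j k) + real N ^ 2 - real N"
proof -
  have "(\<Sum>j<N. \<Sum>k<N. (C j k)\<^sup>2) = (\<Sum>j<N. \<Sum>k<N. S j k + 1 - dl j k)"
    by (rule sum.cong[OF refl], rule sum.cong[OF refl], rule assms) auto
  also have "\<dots> = (\<Sum>j<N. \<Sum>k<N. S j k) + real N ^ 2 - real N"
    by (simp add: sum.distrib sum_subtractf power2_eq_square)
  finally show ?thesis .
qed

lemma poly_aux:
  fixes N M l PP RR q s pq rs sQ a1 a2 t :: real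
  assumes PP: "PP = (N^3 - 3 * N^2 + 2 * N)/3 + a1 + N ^ 2 - N"
    and RR: "RR = (M^3 - 3 * M^2 + 2 * M)/3 + a2 + M ^ 2 - M"
    and MX: "2 * pq + s = N ^ 2 * M - N * M + t"
    and MY: "2 * rs - q = - N * M ^ 2 + N * M - t"
    and l: "l = N - M"
  shows "- (1/2) * (PP + N * l\<^sup>2 + q - 2 * l * 0 + 2 * l * sQ - 2 * pq)
       + (1/2) * (RR + M * l\<^sup>2 + s + 2 * l * 0 + 2 * l * sQ + 2 * rs) + (1/2) * a1 - (1/2) * a2
       = - (l * (4 * l\<^sup>2 - 1)) / 6"
proof -
  have s: "s = N ^ 2 * M - N * M + t - 2 * pq" using MX by simp
  have q: "q = 2 * rs + N * M ^ 2 - N * M + t" using MY by simp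
  show ?thesis unfolding PP RR s q l by (simp add: field_simps power2_eq_square power3_eq_cube)
qed

lemma core_abstract:
  fixes C D T Sx Sy :: "nat \<Rightarrow> nat \<Rightarrow> real" and N M :: nat and l :: real
  assumes l: "l = real N - real M"
    and Canti: "\<And>j k. j < N \<Longrightarrow> k < N \<Longrightarrow> C j k = - C k j"
    and Danti: "\<And>j k. j < M \<Longrightarrow> k < M \<Longrightarrow> D j k = - D k j"
    and C3: "\<And>j k k'. j < N \<Longrightarrow> k < N \<Longrightarrow> k' < N \<Longrightarrow>
     C j k * C j k' + C k k' * C k j + C k' j * C k' k
     = 1 - dl j k - dl k k' - dl j k' + 2 * dl j k * dl k k'
       + dl j k * (C j k')\<^sup>2 + dl k k' * (C j k)\<^sup>2 + dl j k' * (C j k)\<^sup>2"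
    and D3: "\<And>j k k'. j < M \<Longrightarrow> k < M \<Longrightarrow> k' < M \<Longrightarrow>
     D j k * D j k' + D k k' * D k j + D k' j * D k' k
     = 1 - dl j k - dl k k' - dl j k' + 2 * dl j k * dl k k'
       + dl j k * (D j k')\<^sup>2 + dl k k' * (D j k)\<^sup>2 + dl j k' * (D j k)\<^sup>2"
    and CS: "\<And>j k. j < N \<Longrightarrow> k < N \<Longrightarrow> (C j k)\<^sup>2 = Sx j k + 1 - dl j k"
    and DS: "\<And>j k. j < M \<Longrightarrow> k < M \<Longrightarrow> (D j k)\<^sup>2 = Sy j k + 1 - dl j k"
    and Tx: "\<And>j k n. j < N \<Longrightarrow> k < N \<Longrightarrow> n < M \<Longrightarrow>
     C j k * T j n + C k j * T k n + T j n * T k n = 1 - dl j k + dl j k * (T j n)\<^sup>2"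
    and Ty: "\<And>n m j. n < M \<Longrightarrow> m < M \<Longrightarrow> j < N \<Longrightarrow>
     D n m * T j n + D m n * T j m - T j n * T j m = - 1 + dl n m - dl n m * (T j n)\<^sup>2"
  shows "- (1/2) * (\<Sum>j<N. ((\<Sum>k<N. C j k) - l - (\<Sum>n<M. T j n))\<^sup>2)
         + (1/2) * (\<Sum>n<M. ((\<Sum>m<M. D n m) + l + (\<Sum>j<N. T j n))\<^sup>2)
         + (1/2) * (\<Sum>j<N. \<Sum>k<N. Sx j k) - (1/2) * (\<Sum>n<M. \<Sum>m<M. Sy n m)
         = - (l * (4 * l\<^sup>2 - 1)) / 6"
proof -
  define P where "P j = (\<Sum>k<N. C j k)" for j
  define Q where "Q j = (\<Sum>n<M. T j n)" for j
  define R where "R n = (\<Sum>m<M. D n m)" for n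
  define S where "S n = (\<Sum>j<N. T j n)" for n
  have sP: "(\<Sum>j<N. P j) = 0" unfolding P_def using Canti by (rule sum_anti_zero)
  have sR: "(\<Sum>n<M. R n) = 0" unfolding R_def using Danti by (rule sum_anti_zero)
  have sQS: "(\<Sum>j<N. Q j) = (\<Sum>n<M. S n)" unfolding Q_def S_def by (rule sum.swap)
  have PP: "(\<Sum>j<N. (P j)\<^sup>2) = (real N^3 - 3 * real N^2 + 2 * real N)/3 + (\<Sum>j<N. \<Sum>k<N. Sx j k) + real N ^ 2 - real N"
    using triple_sum[OF C3] sq_sum_CS[OF CS] unfolding P_def by simp
  have RR: "(\<Sum>n<M. (R n)\<^sup>2) = (real M^3 - 3 * real M^2 + 2 * real M)/3 + (\<Sum>j<M. \<Sum>k<M. Sy j k) + real M ^ 2 - real M"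
    using triple_sum[OF D3] sq_sum_CS[OF DS] unfolding R_def by simp
  have MX: "2 * (\<Sum>j<N. P j * Q j) + (\<Sum>n<M. (S n)\<^sup>2)
    = real N ^ 2 * real M - real N * real M + (\<Sum>j<N. \<Sum>n<M. (T j n)\<^sup>2)"
    unfolding P_def Q_def S_def by (rule mixed_x[OF Tx])
  have MY: "2 * (\<Sum>n<M. R n * S n) - (\<Sum>j<N. (Q j)\<^sup>2)
    = - real N * real M ^ 2 + real N * real M - (\<Sum>j<N. \<Sum>n<M. (T j n)\<^sup>2)"
    unfolding R_def Q_def S_def by (rule mixed_y[OF Ty])
  have EA: "(\<Sum>j<N. (P j - l - Q j)\<^sup>2) = (\<Sum>j<N. (P j)\<^sup>2) + real N * l\<^sup>2 + (\<Sum>j<N. (Q j)\<^sup>2)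
      - 2 * l * (\<Sum>j<N. P j) + 2 * l * (\<Sum>j<N. Q j) - 2 * (\<Sum>j<N. P j * Q j)" (is "_ = ?R")
  proof -
    have "(\<Sum>j<N. (P j - l - Q j)\<^sup>2) = (\<Sum>j<N. (P j)\<^sup>2 + l\<^sup>2 + (Q j)\<^sup>2 - 2 * l * P j + 2 * l * Q j - 2 * (P j * Q j))"
      by (intro sum.cong refl) (simp add: power2_eq_square algebra_simps)
    also have "\<dots> = ?R"
      by (simp add: sum.distrib sum_subtractf sum_distrib_left)
    finally show ?thesis .
  qed
  have EB: "(\<Sum>n<M. (R n + l + S n)\<^sup>2) = (\<Sum>n<M. (R n)\<^sup>2) + real M * l\<^sup>2 + (\<Sum>n<M. (S n)\<^sup>2)
      + 2 * l * (\<Sum>n<M. R n) + 2 * l * (\<Sum>n<M. S n) + 2 * (\<Sum>n<M. R n * S n)" (is "_ = ?R")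
  proof -
    have "(\<Sum>n<M. (R n + l + S n)\<^sup>2) = (\<Sum>n<M. (R n)\<^sup>2 + l\<^sup>2 + (S n)\<^sup>2 + 2 * l * R n + 2 * l * S n + 2 * (R n * S n))"
      by (intro sum.cong refl) (simp add: power2_eq_square algebra_simps)
    also have "\<dots> = ?R"
      by (simp add: sum.distrib sum_subtractf sum_distrib_left)
    finally show ?thesis .
  qed
  have "- (1/2) * (\<Sum>j<N. (P j - l - Q j)\<^sup>2) + (1/2) * (\<Sum>n<M. (R n + l + S n)\<^sup>2)
         + (1/2) * (\<Sum>j<N. \<Sum>k<N. Sx j k) - (1/2) * (\<Sum>n<M. \<Sum>m<M. Sy n m)
         = - (l * (4 * l\<^sup>2 - 1)) / 6"
    unfolding EA EB sP sR sQS by (rule poly_aux[OF PP RR MX MY l])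
  then show ?thesis unfolding P_def Q_def R_def S_def .
qed



definition cth :: "real \<Rightarrow> real \<Rightarrow> real" where "cth mu t = cosh (mu*t/2) / sinh (mu*t/2)"
definition th :: "real \<Rightarrow> real \<Rightarrow> real" where "th mu t = sinh (mu*t/2) / cosh (mu*t/2)"
definition is2 :: "real \<Rightarrow> real \<Rightarrow> real" where "is2 mu t = 1 / (sinh (mu*t/2))^2"

lemma arg_split: "mu * (a - b) / 2 = mu*a/2 - mu*b/2" for mu a b :: real
  by (simp add: field_simps)

lemma cth_split: "cth mu (a - b) = cosh (mu*a/2 - mu*b/2) / sinh (mu*a/2 - mu*b/2)"
  unfolding cth_def arg_split ..
lemma th_split: "th mu (a - b) = sinh (mu*a/2 - mu*b/2) / cosh (mu*a/2 - mu*b/2)"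
  unfolding th_def arg_split ..

lemma cth_0[simp]: "cth mu 0 = 0" by (simp add: cth_def)
lemma cth_odd: "cth mu (a - b) = - cth mu (b - a)"
proof -
  have "mu * (b - a) / 2 = - (mu * (a - b) / 2)" by (simp add: field_simps)
  then show ?thesis by (simp add: cth_def)
qed
lemma th_odd: "th mu (a - b) = - th mu (b - a)"
proof -
  have "mu * (b - a) / 2 = - (mu * (a - b) / 2)" by (simp add: field_simps)
  then show ?thesis by (simp add: th_def)
qed
lemma is2_even: "is2 mu (a - b) = is2 mu (b - a)"
proof -
  have "mu * (b - a) / 2 = - (mu * (a - b) / 2)" by (simp add: field_simps)
  then show ?thesis by (simp add: is2_def)
qed
lemma is2_0[simp]: "is2 mu 0 = 0" by (simp add: is2_def)

lemma sinh_ne: "mu \<noteq> 0 \<Longrightarrow> a \<noteq> b \<Longrightarrow> sinh (mu * (a - b) / 2) \<noteq> 0" for mu a b :: real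
  by simp

lemma cth_sq: "mu \<noteq> 0 \<Longrightarrow> a \<noteq> b \<Longrightarrow> (cth mu (a - b))\<^sup>2 = is2 mu (a - b) + 1"
  using sinh_ne[of mu a b] cosh_square_eq[of "mu * (a - b) / 2"]
  by (simp add: cth_def is2_def power_divide field_simps)

lemma triple_cth: "mu \<noteq> 0 \<Longrightarrow> a \<noteq> b \<Longrightarrow> b \<noteq> c \<Longrightarrow> a \<noteq> c \<Longrightarrow>
  cth mu (a-b) * cth mu (a-c) + cth mu (b-c) * cth mu (b-a) + cth mu (c-a) * cth mu (c-b) = 1"
  unfolding cth_split by (rule triple_coth) auto

lemma mixed_cth: "mu \<noteq> 0 \<Longrightarrow> a \<noteq> b \<Longrightarrow>
  cth mu (a-b) * (th mu (a-y) - th mu (b-y)) + th mu (a-y) * th mu (b-y) = 1"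
  unfolding cth_split th_split by (rule mixed_coth) auto

context
  fixes mu :: real and z :: "nat \<Rightarrow> real" and N :: nat
  assumes mu: "mu \<noteq> 0" and inj: "inj_on z {..<N}"
begin

lemma zne: "j < N \<Longrightarrow> k < N \<Longrightarrow> j \<noteq> k \<Longrightarrow> z j \<noteq> z k"
  using inj by (auto dest: inj_onD)

lemma C_anti: "cth mu (z j - z k) = - cth mu (z k - z j)" by (rule cth_odd)

lemma C_S: "j < N \<Longrightarrow> k < N \<Longrightarrow> (cth mu (z j - z k))\<^sup>2 = is2 mu (z j - z k) + 1 - dl j k"
  using cth_sq[OF mu zne] by auto

lemma C_3: assumes "j < N" "k < N" "k' < N"
  shows "cth mu (z j - z k) * cth mu (z j - z k') + cth mu (z k - z k') * cth mu (z k - z j)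
       + cth mu (z k' - z j) * cth mu (z k' - z k)
     = 1 - dl j k - dl k k' - dl j k' + 2 * dl j k * dl k k'
       + dl j k * (cth mu (z j - z k'))\<^sup>2 + dl k k' * (cth mu (z j - z k))\<^sup>2 + dl j k' * (cth mu (z j - z k))\<^sup>2"
proof (cases "j = k \<or> k = k' \<or> j = k'")
  case True
  have o1: "cth mu (z k' - z j) = - cth mu (z j - z k')" by (rule cth_odd)
  have o2: "cth mu (z k - z j) = - cth mu (z j - z k)" by (rule cth_odd)
  have o3: "cth mu (z k' - z k) = - cth mu (z k - z k')" by (rule cth_odd)
  consider "j = k" "k = k'" | "j = k" "k \<noteq> k'" | "j \<noteq> k" "k = k'" | "j \<noteq> k" "k \<noteq> k'" "j = k'"
    using True by blast
  then show ?thesis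
  proof cases
    case 1 then show ?thesis by simp
  next
    case 2 then show ?thesis using cth_odd[of mu "z k'" "z k"] by (simp add: power2_eq_square)
  next
    case 3 then show ?thesis by (simp add: power2_eq_square)
  next
    case 4 then show ?thesis using cth_odd[of mu "z k" "z j"] by (simp add: power2_eq_square)
  qed
next
  case False
  then show ?thesis using triple_cth[OF mu zne zne zne] assms by auto
qed

end

lemma T_x: assumes mu: "mu \<noteq> 0" and inj: "inj_on x {..<N}" and "j < N" "k < N"
  shows "cth mu (x j - x k) * th mu (x j - w) + cth mu (x k - x j) * th mu (x k - w) + th mu (x j - w) * th mu (x k - w)
     = 1 - dl j k + dl j k * (th mu (x j - w))\<^sup>2"
proof (cases "j = k")
  case True then show ?thesis by (simp add: power2_eq_square)
next
  case False
  then have "x j \<noteq> x k" using inj assms by (auto dest: inj_onD)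
  from mixed_cth[OF mu this, of w] False show ?thesis
    using cth_odd[of mu "x j" "x k"] by (simp add: algebra_simps)
qed

lemma T_y: assumes mu: "mu \<noteq> 0" and inj: "inj_on y {..<M}" and "n < M" "m < M"
  shows "cth mu (y n - y m) * th mu (w - y n) + cth mu (y m - y n) * th mu (w - y m) - th mu (w - y n) * th mu (w - y m)
     = - 1 + dl n m - dl n m * (th mu (w - y n))\<^sup>2"
proof (cases "n = m")
  case True then show ?thesis by (simp add: power2_eq_square)
next
  case False
  then have "y n \<noteq> y m" using inj assms by (auto dest: inj_onD)
  from mixed_cth[OF mu this, of w] False show ?thesis
    using cth_odd[of mu "y n" "y m"] th_odd[of mu w "y n"] th_odd[of mu w "y m"] by (simp add: algebra_simps)
qed



definition PhiW :: "real \<Rightarrow> nat \<Rightarrow> (nat \<Rightarrow> real) \<Rightarrow> real" where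
  "PhiW mu n z = (\<Sum>a<n. \<Sum>b\<in>{Suc a..<n}. ln (4 * (sinh (mu * (z a - z b) / 2)) ^ 2))"

definition PhiK :: "real \<Rightarrow> nat \<Rightarrow> nat \<Rightarrow> (nat \<Rightarrow> real) \<Rightarrow> (nat \<Rightarrow> real) \<Rightarrow> real" where
  "PhiK mu N M x y = (\<Sum>m<N. \<Sum>n<M. ln (2 * cosh (mu * (x m - y n) / 2)))"

definition Phi :: "real \<Rightarrow> real \<Rightarrow> real \<Rightarrow> nat \<Rightarrow> nat \<Rightarrow> (nat \<Rightarrow> real) \<Rightarrow> (nat \<Rightarrow> real) \<Rightarrow> real" where
  "Phi hbar mu g N l x y = g/(2*hbar) * PhiW mu N x + g/(2*hbar) * PhiW mu (N-l) y
     + mu * g * real l / (2 * hbar) * ((\<Sum>n<N - l. y n) - (\<Sum>m<N. x m)) - g/hbar * PhiK mu N (N-l) x y"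

lemma W_exp:
  assumes mu: "mu \<noteq> 0" and inj: "inj_on z {..<n}"
  shows "W_nr_sqrt hbar mu g n z = exp (g/(2*hbar) * PhiW mu n z)"
proof -
  have pos: "4 * (sinh (mu * (z a - z b) / 2)) ^ 2 > 0" if "a < n" "b \<in> {Suc a..<n}" for a b
  proof -
    have "z a \<noteq> z b" using inj that by (auto dest: inj_onD)
    then have "sinh (mu * (z a - z b) / 2) \<noteq> 0" using mu by simp
    then show ?thesis by simp
  qed
  have "W_nr_sqrt hbar mu g n z = (\<Prod>a<n. \<Prod>b\<in>{Suc a..<n}. exp (g/(2*hbar) * ln (4 * (sinh (mu * (z a - z b) / 2)) ^ 2)))"
    unfolding W_nr_sqrt_def
    by (intro prod.cong refl) (use pos in \<open>auto simp: powr_def\<close>)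
  also have "\<dots> = exp (\<Sum>a<n. \<Sum>b\<in>{Suc a..<n}. g/(2*hbar) * ln (4 * (sinh (mu * (z a - z b) / 2)) ^ 2))"
    by (simp add: exp_sum)
  also have "\<dots> = exp (g/(2*hbar) * PhiW mu n z)"
    unfolding PhiW_def by (simp add: sum_distrib_left)
  finally show ?thesis .
qed

lemma K_exp:
  "K_kernel hbar mu g N l x y = exp (mu * g * real l / (2 * hbar) * ((\<Sum>n<N - l. y n) - (\<Sum>m<N. x m)) - g/hbar * PhiK mu N (N-l) x y)"
proof -
  have "(\<Prod>m<N. \<Prod>n<N - l. (2 * cosh (mu * (x m - y n) / 2)) powr (g / hbar))
      = (\<Prod>m<N. \<Prod>n<N - l. exp (g / hbar * ln (2 * cosh (mu * (x m - y n) / 2))))"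
    by (intro prod.cong refl) (simp add: powr_def)
  also have "\<dots> = exp (g/hbar * PhiK mu N (N-l) x y)"
    unfolding PhiK_def by (simp add: exp_sum sum_distrib_left)
  finally show ?thesis unfolding K_kernel_def by (simp add: exp_diff)
qed

lemma Psi_exp:
  assumes mu: "mu \<noteq> 0" and ix: "inj_on x {..<N}" and iy: "inj_on y {..<N-l}"
  shows "Psi_nr hbar mu g N l x y = exp (Phi hbar mu g N l x y)"
  unfolding Psi_nr_def W_exp[OF mu ix] W_exp[OF mu iy] K_exp Phi_def
  by (simp add: exp_add[symmetric] exp_diff algebra_simps)

definition ic2 :: "real \<Rightarrow> real \<Rightarrow> real" where "ic2 mu t = 1 / (cosh (mu*t/2))^2"

lemma upd_deriv: "((\<lambda>s. (z(j:=s)) a) has_real_derivative dl a j) (at s)"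
  by (cases "a = j") (auto intro!: derivative_eq_intros)

lemma d_lsh: assumes "sinh (mu*t/2) \<noteq> 0"
  shows "((\<lambda>t. ln (4 * (sinh (mu * t / 2)) ^ 2)) has_real_derivative mu * cth mu t) (at t)"
proof -
  have p: "0 < sinh (mu * t / 2) * sinh (mu * t / 2)" using assms
    by (metis not_real_square_gt_zero)
  show ?thesis using assms p by (auto intro!: derivative_eq_intros simp: cth_def power2_eq_square field_simps)
qed

lemma d_cth: assumes "sinh (mu*t/2) \<noteq> 0"
  shows "((\<lambda>t. mu * cth mu t) has_real_derivative - (mu^2/2) * is2 mu t) (at t)"
  unfolding cth_def using assms cosh_square_eq[of "mu*t/2"]
  by (auto intro!: derivative_eq_intros simp: is2_def power2_eq_square field_simps)

lemma d_lch: "((\<lambda>t. ln (2 * cosh (mu * t / 2))) has_real_derivative (mu/2) * th mu t) (at t)"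
  by (auto intro!: derivative_eq_intros simp: th_def field_simps add_pos_pos)

lemma d_th: "((\<lambda>t. (mu/2) * th mu t) has_real_derivative (mu^2/4) * ic2 mu t) (at t)"
  unfolding th_def using cosh_square_eq[of "mu*t/2"]
  by (auto intro!: derivative_eq_intros simp: ic2_def power2_eq_square field_simps)

definition dW :: "real \<Rightarrow> nat \<Rightarrow> (nat \<Rightarrow> real) \<Rightarrow> nat \<Rightarrow> real" where
  "dW mu n z j = (\<Sum>a<n. \<Sum>b\<in>{Suc a..<n}. mu * cth mu (z a - z b) * (dl a j - dl b j))"
definition d2W :: "real \<Rightarrow> nat \<Rightarrow> (nat \<Rightarrow> real) \<Rightarrow> nat \<Rightarrow> real" where
  "d2W mu n z j = (\<Sum>a<n. \<Sum>b\<in>{Suc a..<n}. - (mu^2/2) * is2 mu (z a - z b) * (dl a j - dl b j) * (dl a j - dl b j))"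
definition dKx :: "real \<Rightarrow> nat \<Rightarrow> nat \<Rightarrow> (nat \<Rightarrow> real) \<Rightarrow> (nat \<Rightarrow> real) \<Rightarrow> nat \<Rightarrow> real" where
  "dKx mu N M x y j = (\<Sum>m<N. \<Sum>n<M. (mu/2) * th mu (x m - y n) * (dl m j - 0))"
definition d2Kx :: "real \<Rightarrow> nat \<Rightarrow> nat \<Rightarrow> (nat \<Rightarrow> real) \<Rightarrow> (nat \<Rightarrow> real) \<Rightarrow> nat \<Rightarrow> real" where
  "d2Kx mu N M x y j = (\<Sum>m<N. \<Sum>n<M. (mu^2/4) * ic2 mu (x m - y n) * (dl m j - 0) * (dl m j - 0))"
definition dKy :: "real \<Rightarrow> nat \<Rightarrow> nat \<Rightarrow> (nat \<Rightarrow> real) \<Rightarrow> (nat \<Rightarrow> real) \<Rightarrow> nat \<Rightarrow> real" where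
  "dKy mu N M x y j = (\<Sum>m<N. \<Sum>n<M. (mu/2) * th mu (x m - y n) * (0 - dl n j))"
definition d2Ky :: "real \<Rightarrow> nat \<Rightarrow> nat \<Rightarrow> (nat \<Rightarrow> real) \<Rightarrow> (nat \<Rightarrow> real) \<Rightarrow> nat \<Rightarrow> real" where
  "d2Ky mu N M x y j = (\<Sum>m<N. \<Sum>n<M. (mu^2/4) * ic2 mu (x m - y n) * (0 - dl n j) * (0 - dl n j))"

lemma PhiW_deriv:
  assumes mu: "mu \<noteq> 0" and d: "\<And>a b. a < n \<Longrightarrow> b < n \<Longrightarrow> a \<noteq> b \<Longrightarrow> (z(j:=s)) a \<noteq> (z(j:=s)) b"
  shows "((\<lambda>s. PhiW mu n (z(j:=s))) has_real_derivative dW mu n (z(j:=s)) j) (at s)"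
  unfolding PhiW_def dW_def
proof (intro DERIV_sum)
  fix a b assume a: "a \<in> {..<n}" and b: "b \<in> {Suc a..<n}"
  have "sinh (mu * ((z(j:=s)) a - (z(j:=s)) b) / 2) \<noteq> 0" using d[of a b] a b mu by simp
  from DERIV_chain2[OF d_lsh[OF this] DERIV_diff[OF upd_deriv upd_deriv]]
  show "((\<lambda>s. ln (4 * (sinh (mu * ((z(j:=s)) a - (z(j:=s)) b) / 2))\<^sup>2)) has_real_derivative
          mu * cth mu ((z(j:=s)) a - (z(j:=s)) b) * (dl a j - dl b j)) (at s)" by simp
qed

lemma dW_deriv:
  assumes mu: "mu \<noteq> 0" and d: "\<And>a b. a < n \<Longrightarrow> b < n \<Longrightarrow> a \<noteq> b \<Longrightarrow> (z(j:=s)) a \<noteq> (z(j:=s)) b"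
  shows "((\<lambda>s. dW mu n (z(j:=s)) j) has_real_derivative d2W mu n (z(j:=s)) j) (at s)"
  unfolding d2W_def dW_def
proof (intro DERIV_sum)
  fix a b assume a: "a \<in> {..<n}" and b: "b \<in> {Suc a..<n}"
  have "sinh (mu * ((z(j:=s)) a - (z(j:=s)) b) / 2) \<noteq> 0" using d[of a b] a b mu by simp
  from DERIV_cmult[OF DERIV_chain2[OF d_cth[OF this] DERIV_diff[OF upd_deriv upd_deriv]], of "dl a j - dl b j"]
  show "((\<lambda>s. mu * cth mu ((z(j:=s)) a - (z(j:=s)) b) * (dl a j - dl b j)) has_real_derivative
          - (mu^2/2) * is2 mu ((z(j:=s)) a - (z(j:=s)) b) * (dl a j - dl b j) * (dl a j - dl b j)) (at s)"
    by (simp add: mult.commute mult.left_commute)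
qed

lemma PhiK_dx: "((\<lambda>s. PhiK mu N M (x(j:=s)) y) has_real_derivative dKx mu N M (x(j:=s)) y j) (at s)"
  unfolding PhiK_def dKx_def
proof (intro DERIV_sum)
  fix m n
  from DERIV_chain2[OF d_lch DERIV_diff[OF upd_deriv DERIV_const]]
  show "((\<lambda>s. ln (2 * cosh (mu * ((x(j:=s)) m - y n) / 2))) has_real_derivative
          mu / 2 * th mu ((x(j:=s)) m - y n) * (dl m j - 0)) (at s)" by simp
qed

lemma dKx_deriv: "((\<lambda>s. dKx mu N M (x(j:=s)) y j) has_real_derivative d2Kx mu N M (x(j:=s)) y j) (at s)"
  unfolding dKx_def d2Kx_def
proof (intro DERIV_sum)
  fix m n
  from DERIV_cmult[OF DERIV_chain2[OF d_th DERIV_diff[OF upd_deriv DERIV_const]], of "dl m j - 0"]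
  show "((\<lambda>s. mu / 2 * th mu ((x(j:=s)) m - y n) * (dl m j - 0)) has_real_derivative
          (mu^2/4) * ic2 mu ((x(j:=s)) m - y n) * (dl m j - 0) * (dl m j - 0)) (at s)"
    by (simp add: mult.commute mult.left_commute)
qed

lemma PhiK_dy: "((\<lambda>s. PhiK mu N M x (y(j:=s))) has_real_derivative dKy mu N M x (y(j:=s)) j) (at s)"
  unfolding PhiK_def dKy_def
proof (intro DERIV_sum)
  fix m n
  from DERIV_chain2[OF d_lch DERIV_diff[OF DERIV_const upd_deriv]]
  show "((\<lambda>s. ln (2 * cosh (mu * (x m - (y(j:=s)) n) / 2))) has_real_derivative
          mu / 2 * th mu (x m - (y(j:=s)) n) * (0 - dl n j)) (at s)" by simp
qed

lemma dKy_deriv: "((\<lambda>s. dKy mu N M x (y(j:=s)) j) has_real_derivative d2Ky mu N M x (y(j:=s)) j) (at s)"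
  unfolding dKy_def d2Ky_def
proof (intro DERIV_sum)
  fix m n
  from DERIV_cmult[OF DERIV_chain2[OF d_th DERIV_diff[OF DERIV_const upd_deriv]], of "0 - dl n j"]
  show "((\<lambda>s. mu / 2 * th mu (x m - (y(j:=s)) n) * (0 - dl n j)) has_real_derivative
          (mu^2/4) * ic2 mu (x m - (y(j:=s)) n) * (0 - dl n j) * (0 - dl n j)) (at s)"
    by (simp add: mult.commute mult.left_commute)
qed

lemma lin_deriv: "((\<lambda>s. \<Sum>m<N. (z(j:=s)) m) has_real_derivative (\<Sum>m<N. dl m j)) (at s)"
  by (intro DERIV_sum upd_deriv)

lemma second_deriv_exp:
  assumes S: "open S" "t0 \<in> S"
    and f: "\<And>s. s \<in> S \<Longrightarrow> f s = exp (\<phi> s)"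
    and d1: "\<And>s. s \<in> S \<Longrightarrow> (\<phi> has_real_derivative \<phi>1 s) (at s)"
    and d2: "\<And>s. s \<in> S \<Longrightarrow> (\<phi>1 has_real_derivative \<phi>2 s) (at s)"
  shows "deriv (\<lambda>t. deriv f t) t0 = exp (\<phi> t0) * ((\<phi>1 t0)^2 + \<phi>2 t0)"
proof -
  have df: "deriv f s = exp (\<phi> s) * \<phi>1 s" if s: "s \<in> S" for s
  proof -
    have "((\<lambda>s. exp (\<phi> s)) has_real_derivative exp (\<phi> s) * \<phi>1 s) (at s)"
      using DERIV_chain2[OF DERIV_exp d1[OF s]] by simp
    then have "(f has_real_derivative exp (\<phi> s) * \<phi>1 s) (at s)"
      by (rule has_field_derivative_transform_within_open[OF _ S(1) s]) (simp add: f)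
    then show ?thesis by (rule DERIV_imp_deriv)
  qed
  have "((\<lambda>t. exp (\<phi> t) * \<phi>1 t) has_real_derivative exp (\<phi> t0) * \<phi>1 t0 * \<phi>1 t0 + exp (\<phi> t0) * \<phi>2 t0) (at t0)"
    using DERIV_mult[OF DERIV_chain2[OF DERIV_exp d1[OF S(2)]] d2[OF S(2)]] by (simp add: mult.commute)
  then have "((\<lambda>t. deriv f t) has_real_derivative exp (\<phi> t0) * \<phi>1 t0 * \<phi>1 t0 + exp (\<phi> t0) * \<phi>2 t0) (at t0)"
    by (rule has_field_derivative_transform_within_open[OF _ S]) (simp add: df)
  then have "deriv (\<lambda>t. deriv f t) t0 = exp (\<phi> t0) * \<phi>1 t0 * \<phi>1 t0 + exp (\<phi> t0) * \<phi>2 t0"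
    by (rule DERIV_imp_deriv)
  then show ?thesis by (simp add: power2_eq_square algebra_simps)
qed

definition G1x :: "real \<Rightarrow> real \<Rightarrow> real \<Rightarrow> nat \<Rightarrow> nat \<Rightarrow> (nat \<Rightarrow> real) \<Rightarrow> (nat \<Rightarrow> real) \<Rightarrow> nat \<Rightarrow> real" where "G1x hbar mu g N l x y j = g/(2*hbar) * dW mu N x j
   - mu*g*real l/(2*hbar) * (\<Sum>m<N. dl m j) - g/hbar * dKx mu N (N-l) x y j"
definition G2x :: "real \<Rightarrow> real \<Rightarrow> real \<Rightarrow> nat \<Rightarrow> nat \<Rightarrow> (nat \<Rightarrow> real) \<Rightarrow> (nat \<Rightarrow> real) \<Rightarrow> nat \<Rightarrow> real" where "G2x hbar mu g N l x y j = g/(2*hbar) * d2W mu N x j - g/hbar * d2Kx mu N (N-l) x y j"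
definition G1y :: "real \<Rightarrow> real \<Rightarrow> real \<Rightarrow> nat \<Rightarrow> nat \<Rightarrow> (nat \<Rightarrow> real) \<Rightarrow> (nat \<Rightarrow> real) \<Rightarrow> nat \<Rightarrow> real" where "G1y hbar mu g N l x y j = g/(2*hbar) * dW mu (N-l) y j
   + mu*g*real l/(2*hbar) * (\<Sum>m<N-l. dl m j) - g/hbar * dKy mu N (N-l) x y j"
definition G2y :: "real \<Rightarrow> real \<Rightarrow> real \<Rightarrow> nat \<Rightarrow> nat \<Rightarrow> (nat \<Rightarrow> real) \<Rightarrow> (nat \<Rightarrow> real) \<Rightarrow> nat \<Rightarrow> real" where "G2y hbar mu g N l x y j = g/(2*hbar) * d2W mu (N-l) y j - g/hbar * d2Ky mu N (N-l) x y j"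

lemma Phi_dx:
  assumes mu: "mu \<noteq> 0" and d: "\<And>a b. a < N \<Longrightarrow> b < N \<Longrightarrow> a \<noteq> b \<Longrightarrow> (x(j:=s)) a \<noteq> (x(j:=s)) b"
  shows "((\<lambda>s. Phi hbar mu g N l (x(j:=s)) y) has_real_derivative G1x hbar mu g N l (x(j:=s)) y j) (at s)"
  unfolding Phi_def G1x_def
  by (rule DERIV_cong[OF DERIV_diff[OF DERIV_add[OF DERIV_add[OF DERIV_cmult[OF PhiW_deriv[OF mu d]] DERIV_const]
        DERIV_cmult[OF DERIV_diff[OF DERIV_const lin_deriv]]] DERIV_cmult[OF PhiK_dx]]])
     (auto simp: algebra_simps)

lemma G1x_deriv:
  assumes mu: "mu \<noteq> 0" and d: "\<And>a b. a < N \<Longrightarrow> b < N \<Longrightarrow> a \<noteq> b \<Longrightarrow> (x(j:=s)) a \<noteq> (x(j:=s)) b"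
  shows "((\<lambda>s. G1x hbar mu g N l (x(j:=s)) y j) has_real_derivative G2x hbar mu g N l (x(j:=s)) y j) (at s)"
  unfolding G1x_def G2x_def
  by (rule DERIV_cong[OF DERIV_diff[OF DERIV_diff[OF DERIV_cmult[OF dW_deriv[OF mu d]] DERIV_const]
        DERIV_cmult[OF dKx_deriv]]])
     (auto simp: algebra_simps)

lemma Phi_dy:
  assumes mu: "mu \<noteq> 0" and d: "\<And>a b. a < N-l \<Longrightarrow> b < N-l \<Longrightarrow> a \<noteq> b \<Longrightarrow> (y(j:=s)) a \<noteq> (y(j:=s)) b"
  shows "((\<lambda>s. Phi hbar mu g N l x (y(j:=s))) has_real_derivative G1y hbar mu g N l x (y(j:=s)) j) (at s)"
  unfolding Phi_def G1y_def
  by (rule DERIV_cong[OF DERIV_diff[OF DERIV_add[OF DERIV_add[OF DERIV_const DERIV_cmult[OF PhiW_deriv[OF mu d]]]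
        DERIV_cmult[OF DERIV_diff[OF lin_deriv DERIV_const]]] DERIV_cmult[OF PhiK_dy]]])
     (auto simp: algebra_simps)

lemma G1y_deriv:
  assumes mu: "mu \<noteq> 0" and d: "\<And>a b. a < N-l \<Longrightarrow> b < N-l \<Longrightarrow> a \<noteq> b \<Longrightarrow> (y(j:=s)) a \<noteq> (y(j:=s)) b"
  shows "((\<lambda>s. G1y hbar mu g N l x (y(j:=s)) j) has_real_derivative G2y hbar mu g N l x (y(j:=s)) j) (at s)"
  unfolding G1y_def G2y_def
  by (rule DERIV_cong[OF DERIV_diff[OF DERIV_add[OF DERIV_cmult[OF dW_deriv[OF mu d]] DERIV_const]
        DERIV_cmult[OF dKy_deriv]]])
     (auto simp: algebra_simps)

lemma upd_distinct:
  assumes inj: "inj_on z {..<n}" and s: "s \<in> - (z ` ({..<n} - {j}))"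
  shows "\<And>a b. a < n \<Longrightarrow> b < n \<Longrightarrow> a \<noteq> b \<Longrightarrow> (z(j:=s)) a \<noteq> (z(j:=s)) b"
    and "inj_on (z(j:=s)) {..<n}"
proof -
  show d: "\<And>a b. a < n \<Longrightarrow> b < n \<Longrightarrow> a \<noteq> b \<Longrightarrow> (z(j:=s)) a \<noteq> (z(j:=s)) b"
    using inj s by (auto dest: inj_onD)
  show "inj_on (z(j:=s)) {..<n}" using d unfolding inj_on_def by blast
qed

lemma partial2_x:
  assumes mu: "mu \<noteq> 0" and ix: "inj_on x {..<N}" and iy: "inj_on y {..<N-l}" and j: "j < N"
  shows "partial2 (\<lambda>x'. Psi_nr hbar mu g N l x' y) x j
     = Psi_nr hbar mu g N l x y * ((G1x hbar mu g N l x y j)^2 + G2x hbar mu g N l x y j)"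
proof -
  define S where "S = - (x ` ({..<N} - {j}))"
  have S: "open S" "x j \<in> S" unfolding S_def using ix j
    by (auto intro!: open_Compl finite_imp_closed dest: inj_onD)
  have "deriv (\<lambda>t. deriv (\<lambda>s. Psi_nr hbar mu g N l (x(j:=s)) y) t) (x j)
     = exp (Phi hbar mu g N l (x(j:=x j)) y) * ((G1x hbar mu g N l (x(j:=x j)) y j)^2 + G2x hbar mu g N l (x(j:=x j)) y j)"
  proof (rule second_deriv_exp[OF S])
    fix s assume s: "s \<in> S"
    note u = upd_distinct[OF ix s[unfolded S_def]]
    show "Psi_nr hbar mu g N l (x(j:=s)) y = exp (Phi hbar mu g N l (x(j:=s)) y)"
      by (rule Psi_exp[OF mu u(2) iy])
    show "((\<lambda>s. Phi hbar mu g N l (x(j:=s)) y) has_real_derivative G1x hbar mu g N l (x(j:=s)) y j) (at s)"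
      by (rule Phi_dx[OF mu u(1)])
    show "((\<lambda>s. G1x hbar mu g N l (x(j:=s)) y j) has_real_derivative G2x hbar mu g N l (x(j:=s)) y j) (at s)"
      by (rule G1x_deriv[OF mu u(1)])
  qed
  then show ?thesis unfolding partial2_def using Psi_exp[OF mu ix iy] by simp
qed

lemma partial2_y:
  assumes mu: "mu \<noteq> 0" and ix: "inj_on x {..<N}" and iy: "inj_on y {..<N-l}" and j: "j < N-l"
  shows "partial2 (\<lambda>y'. Psi_nr hbar mu g N l x y') y j
     = Psi_nr hbar mu g N l x y * ((G1y hbar mu g N l x y j)^2 + G2y hbar mu g N l x y j)"
proof -
  define S where "S = - (y ` ({..<N-l} - {j}))"
  have S: "open S" "y j \<in> S" unfolding S_def using iy j
    by (auto intro!: open_Compl finite_imp_closed dest: inj_onD)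
  have "deriv (\<lambda>t. deriv (\<lambda>s. Psi_nr hbar mu g N l x (y(j:=s))) t) (y j)
     = exp (Phi hbar mu g N l x (y(j:=y j))) * ((G1y hbar mu g N l x (y(j:=y j)) j)^2 + G2y hbar mu g N l x (y(j:=y j)) j)"
  proof (rule second_deriv_exp[OF S])
    fix s assume s: "s \<in> S"
    note u = upd_distinct[OF iy s[unfolded S_def]]
    show "Psi_nr hbar mu g N l x (y(j:=s)) = exp (Phi hbar mu g N l x (y(j:=s)))"
      by (rule Psi_exp[OF mu ix u(2)])
    show "((\<lambda>s. Phi hbar mu g N l x (y(j:=s))) has_real_derivative G1y hbar mu g N l x (y(j:=s)) j) (at s)"
      by (rule Phi_dy[OF mu u(1)])
    show "((\<lambda>s. G1y hbar mu g N l x (y(j:=s)) j) has_real_derivative G2y hbar mu g N l x (y(j:=s)) j) (at s)"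
      by (rule G1y_deriv[OF mu u(1)])
  qed
  then show ?thesis unfolding partial2_def using Psi_exp[OF mu ix iy] by simp
qed



lemma split3: assumes "j < (n::nat)"
  shows "(\<Sum>b<n. G b) = (\<Sum>b<j. G b) + G j + (\<Sum>b\<in>{Suc j..<n}. G b :: real)"
proof -
  have e: "{..<n} = {..<j} \<union> ({j} \<union> {Suc j..<n})" using assms by auto
  show ?thesis unfolding e
    by (subst sum.union_disjoint; auto simp: sum.union_disjoint)
qed

lemma pair_delta1: assumes "j < (n::nat)"
  shows "(\<Sum>a<n. \<Sum>b\<in>{Suc a..<n}. F a b * (dl a j - dl b j)) = (\<Sum>b\<in>{Suc j..<n}. F j b) - (\<Sum>a<j. F a j :: real)"
proof -
  have "(\<Sum>a<n. \<Sum>b\<in>{Suc a..<n}. F a b * (dl a j - dl b j))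
      = (\<Sum>a<n. dl a j * (\<Sum>b\<in>{Suc a..<n}. F a b)) - (\<Sum>a<n. \<Sum>b\<in>{Suc a..<n}. F a b * dl b j)"
    by (simp add: sum_subtractf right_diff_distrib sum_distrib_left mult.commute)
  also have "(\<Sum>a<n. dl a j * (\<Sum>b\<in>{Suc a..<n}. F a b)) = (\<Sum>b\<in>{Suc j..<n}. F j b)"
    by (rule sum_dl2[OF assms])
  also have "(\<Sum>a<n. \<Sum>b\<in>{Suc a..<n}. F a b * dl b j) = (\<Sum>a<n. if a < j then F a j else 0)"
  proof (rule sum.cong[OF refl])
    fix a assume "a \<in> {..<n}"
    then show "(\<Sum>b\<in>{Suc a..<n}. F a b * dl b j) = (if a < j then F a j else 0)"
      using assms by (simp add: if_distrib[of "\<lambda>z. F _ _ * z"] sum.delta' cong: if_cong)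
  qed
  also have "\<dots> = (\<Sum>a<j. F a j)"
  proof -
    have "(\<Sum>a<n. if a < j then F a j else 0) = (\<Sum>a\<in>{..<n} \<inter> {a. a < j}. F a j)"
      by (simp add: sum.inter_restrict)
    also have "{..<n} \<inter> {a. a < j} = {..<j}" using assms by auto
    finally show ?thesis .
  qed
  finally show ?thesis .
qed

lemma pair_delta2: assumes "j < (n::nat)"
  shows "(\<Sum>a<n. \<Sum>b\<in>{Suc a..<n}. F a b * (dl a j - dl b j) * (dl a j - dl b j)) = (\<Sum>b\<in>{Suc j..<n}. F j b) + (\<Sum>a<j. F a j :: real)"
proof -
  have "(\<Sum>a<n. \<Sum>b\<in>{Suc a..<n}. F a b * (dl a j - dl b j) * (dl a j - dl b j))
      = (\<Sum>a<n. \<Sum>b\<in>{Suc a..<n}. F a b * (dl a j - 0 * dl b j) - F a b * (0 * dl a j - dl b j))"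
    by (intro sum.cong refl) auto
  also have "\<dots> = (\<Sum>a<n. \<Sum>b\<in>{Suc a..<n}. F a b * (dl a j - dl b j)) + 2 * (\<Sum>a<n. \<Sum>b\<in>{Suc a..<n}. F a b * dl b j)"
    by (simp add: sum_subtractf sum.distrib right_diff_distrib sum_distrib_left algebra_simps)
  also have "(\<Sum>a<n. \<Sum>b\<in>{Suc a..<n}. F a b * dl b j) = (\<Sum>a<j. F a j)"
  proof -
    have "(\<Sum>a<n. \<Sum>b\<in>{Suc a..<n}. F a b * dl b j) = (\<Sum>a<n. if a < j then F a j else 0)"
    proof (rule sum.cong[OF refl])
      fix a assume "a \<in> {..<n}"
      then show "(\<Sum>b\<in>{Suc a..<n}. F a b * dl b j) = (if a < j then F a j else 0)"
        using assms by (simp add: if_distrib[of "\<lambda>z. F _ _ * z"] sum.delta' cong: if_cong)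
    qed
    also have "\<dots> = (\<Sum>a\<in>{..<n} \<inter> {a. a < j}. F a j)"
      by (simp add: sum.inter_restrict)
    also have "{..<n} \<inter> {a. a < j} = {..<j}" using assms by auto
    finally show ?thesis .
  qed
  finally show ?thesis unfolding pair_delta1[OF assms] by simp
qed

lemma dW_eval: assumes "j < n"
  shows "dW mu n z j = (\<Sum>b<n. mu * cth mu (z j - z b))"
proof -
  have "dW mu n z j = (\<Sum>b\<in>{Suc j..<n}. mu * cth mu (z j - z b)) - (\<Sum>a<j. mu * cth mu (z a - z j))"
    unfolding dW_def by (rule pair_delta1[OF assms])
  also have "(\<Sum>a<j. mu * cth mu (z a - z j)) = - (\<Sum>a<j. mu * cth mu (z j - z a))"
    by (simp add: sum_negf[symmetric] cth_odd[of mu "z _" "z j"])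
  finally show ?thesis using split3[OF assms, of "\<lambda>b. mu * cth mu (z j - z b)"] by simp
qed

lemma d2W_eval: assumes "j < n"
  shows "d2W mu n z j = (\<Sum>b<n. - (mu^2/2) * is2 mu (z j - z b))"
proof -
  have "d2W mu n z j = (\<Sum>b\<in>{Suc j..<n}. - (mu^2/2) * is2 mu (z j - z b)) + (\<Sum>a<j. - (mu^2/2) * is2 mu (z a - z j))"
    unfolding d2W_def by (rule pair_delta2[OF assms])
  also have "(\<Sum>a<j. - (mu^2/2) * is2 mu (z a - z j)) = (\<Sum>a<j. - (mu^2/2) * is2 mu (z j - z a))"
    by (simp add: is2_even[of mu "z _" "z j"])
  finally show ?thesis using split3[OF assms, of "\<lambda>b. - (mu^2/2) * is2 mu (z j - z b)"] by simp
qed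

lemma dKx_eval: "j < N \<Longrightarrow> dKx mu N M x y j = (\<Sum>n<M. (mu/2) * th mu (x j - y n))"
proof -
  assume j: "j < N"
  have "dKx mu N M x y j = (\<Sum>m<N. \<Sum>n<M. dl m j * ((mu/2) * th mu (x m - y n)))"
    unfolding dKx_def by (intro sum.cong refl) auto
  also have "\<dots> = (\<Sum>m<N. dl m j * (\<Sum>n<M. (mu/2) * th mu (x m - y n)))"
    by (simp only: sum_distrib_left)
  also have "\<dots> = (\<Sum>n<M. (mu/2) * th mu (x j - y n))"
    by (rule sum_dl2[OF j])
  finally show ?thesis .
qed

lemma d2Kx_eval: "j < N \<Longrightarrow> d2Kx mu N M x y j = (\<Sum>n<M. (mu^2/4) * ic2 mu (x j - y n))"
proof -
  assume j: "j < N"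
  have "d2Kx mu N M x y j = (\<Sum>m<N. \<Sum>n<M. dl m j * ((mu^2/4) * ic2 mu (x m - y n)))"
    unfolding d2Kx_def by (intro sum.cong refl) auto
  also have "\<dots> = (\<Sum>m<N. dl m j * (\<Sum>n<M. (mu^2/4) * ic2 mu (x m - y n)))"
    by (simp only: sum_distrib_left)
  also have "\<dots> = (\<Sum>n<M. (mu^2/4) * ic2 mu (x j - y n))"
    by (rule sum_dl2[OF j])
  finally show ?thesis .
qed

lemma dKy_eval: "j < M \<Longrightarrow> dKy mu N M x y j = - (\<Sum>m<N. (mu/2) * th mu (x m - y j))"
proof -
  assume j: "j < M"
  have "dKy mu N M x y j = - (\<Sum>m<N. \<Sum>n<M. dl n j * ((mu/2) * th mu (x m - y n)))"
    unfolding dKy_def by (simp add: sum_negf[symmetric] mult.commute)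
  also have "(\<Sum>m<N. \<Sum>n<M. dl n j * ((mu/2) * th mu (x m - y n))) = (\<Sum>m<N. (mu/2) * th mu (x m - y j))"
    by (rule sum.cong[OF refl], rule sum_dl2[OF j])
  finally show ?thesis .
qed

lemma d2Ky_eval: "j < M \<Longrightarrow> d2Ky mu N M x y j = (\<Sum>m<N. (mu^2/4) * ic2 mu (x m - y j))"
proof -
  assume j: "j < M"
  have "d2Ky mu N M x y j = (\<Sum>m<N. \<Sum>n<M. dl n j * ((mu^2/4) * ic2 mu (x m - y n)))"
    unfolding d2Ky_def by (intro sum.cong refl) auto
  also have "\<dots> = (\<Sum>m<N. (mu^2/4) * ic2 mu (x m - y j))"
    by (rule sum.cong[OF refl], rule sum_dl2[OF j])
  finally show ?thesis .
qed

lemma pairsum_sym: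
  "(\<Sum>j<n. \<Sum>k<n. F j k) = (\<Sum>j<n. \<Sum>k\<in>{Suc j..<n}. F j k + F k j) + (\<Sum>j<n. F j j :: real)"
proof (induction n)
  case 0 then show ?case by simp
next
  case (Suc n)
  have e: "{Suc j..<Suc n} = insert n {Suc j..<n}" if "j < n" for j using that by auto
  have "(\<Sum>j<Suc n. \<Sum>k\<in>{Suc j..<Suc n}. F j k + F k j)
      = (\<Sum>j<n. \<Sum>k\<in>{Suc j..<Suc n}. F j k + F k j)" by simp
  also have "\<dots> = (\<Sum>j<n. (F j n + F n j) + (\<Sum>k\<in>{Suc j..<n}. F j k + F k j))"
    by (intro sum.cong refl) (simp add: e)
  finally have r: "(\<Sum>j<Suc n. \<Sum>k\<in>{Suc j..<Suc n}. F j k + F k j)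
      = (\<Sum>j<n. F j n) + (\<Sum>j<n. F n j) + (\<Sum>j<n. \<Sum>k\<in>{Suc j..<n}. F j k + F k j)"
    by (simp add: sum.distrib)
  have l: "(\<Sum>j<Suc n. \<Sum>k<Suc n. F j k) = (\<Sum>j<n. \<Sum>k<n. F j k) + (\<Sum>j<n. F j n) + (\<Sum>k<n. F n k) + F n n"
    by (simp add: sum.distrib)
  show ?case unfolding l r Suc by simp
qed

lemma final_alg:
  fixes hbar g mu P E F X Y Z L :: real
  assumes h: "hbar \<noteq> 0"
    and core: "- (1/2) * E + (1/2) * F + (1/2) * X - (1/2) * Y = - (L * (4 * L\<^sup>2 - 1)) / 6"
  shows "(- (hbar^2/2) * (P * ((g*mu/(2*hbar))^2 * E - (g*mu^2/(4*hbar)) * (X + Z))) + g * (g - hbar) * ((mu^2/8) * X) * P)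
      - (- (hbar^2/2) * (P * ((g*mu/(2*hbar))^2 * F - (g*mu^2/(4*hbar)) * (Y + Z))) + g * (g - hbar) * ((mu^2/8) * Y) * P)
      = - (mu ^ 2 * g ^ 2 / 24) * L * (4 * L ^ 2 - 1) * P"
proof -
  have E: "E = F + X - Y + L * (4 * L\<^sup>2 - 1) / 3" using core by (simp add: field_simps)
  show ?thesis unfolding E using h by (simp add: field_simps power2_eq_square)
qed



theorem corollary4p2:
  fixes hbar mu g :: real and N l :: nat and x y :: "nat \<Rightarrow> real"
  assumes "hbar > 0" and "mu > 0" and "g > 0"
    and "l \<le> N"
    and "inj_on x {..<N}" and "inj_on y {..<N - l}"
  shows "H_nr hbar mu g N (\<lambda>x'. Psi_nr hbar mu g N l x' y) x
         - H_nr hbar mu g (N - l) (\<lambda>y'. Psi_nr hbar mu g N l x y') y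
         = - (mu ^ 2 * g ^ 2 / 24) * real l * (4 * (real l) ^ 2 - 1) * Psi_nr hbar mu g N l x y"
proof -
  have h: "hbar \<noteq> 0" using assms(1) by simp
  have mu: "mu \<noteq> 0" using assms(2) by simp
  note ix = assms(5) and iy = assms(6)
  define M where "M = N - l"
  define P where "P = Psi_nr hbar mu g N l x y"
  define k where "k = g*mu/(2*hbar)"
  define lam where "lam = g*mu^2/(4*hbar)"
  define A where "A j = (\<Sum>k<N. cth mu (x j - x k)) - real l - (\<Sum>n<M. th mu (x j - y n))" for j
  define B where "B n = (\<Sum>m<M. cth mu (y n - y m)) + real l + (\<Sum>j<N. th mu (x j - y n))" for n
  define Xj where "Xj j = (\<Sum>b<N. is2 mu (x j - x b))" for j
  define Yn where "Yn n = (\<Sum>m<M. is2 mu (y n - y m))" for n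
  define Zj where "Zj j = (\<Sum>n<M. ic2 mu (x j - y n))" for j
  define Zn where "Zn n = (\<Sum>j<N. ic2 mu (x j - y n))" for n
  have G1x: "G1x hbar mu g N l x y j = k * A j" if j: "j < N" for j
  proof -
    have "G1x hbar mu g N l x y j = g/(2*hbar) * (mu * (\<Sum>b<N. cth mu (x j - x b)))
        - mu*g*real l/(2*hbar) - g/hbar * ((mu/2) * (\<Sum>n<M. th mu (x j - y n)))"
      unfolding G1x_def dW_eval[OF j] dKx_eval[OF j] sum_dl0'[OF j] M_def
      by (simp add: sum_distrib_left)
    also have "\<dots> = k * A j" unfolding k_def A_def using h by (simp add: field_simps)
    finally show ?thesis .
  qed
  have G2x: "G2x hbar mu g N l x y j = - lam * (Xj j + Zj j)" if j: "j < N" for j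
  proof -
    have "G2x hbar mu g N l x y j = g/(2*hbar) * (- (mu^2/2) * (\<Sum>b<N. is2 mu (x j - x b)))
        - g/hbar * ((mu^2/4) * (\<Sum>n<M. ic2 mu (x j - y n)))"
      unfolding G2x_def d2W_eval[OF j] d2Kx_eval[OF j] M_def
      by (simp add: sum_distrib_left)
    then show ?thesis unfolding lam_def Xj_def Zj_def using h by (simp add: field_simps)
  qed
  have G1y: "G1y hbar mu g N l x y n = k * B n" if n: "n < M" for n
  proof -
    have n': "n < N - l" using n M_def by simp
    have "G1y hbar mu g N l x y n = g/(2*hbar) * (mu * (\<Sum>m<M. cth mu (y n - y m)))
        + mu*g*real l/(2*hbar) + g/hbar * ((mu/2) * (\<Sum>m<N. th mu (x m - y n)))"
      unfolding G1y_def dW_eval[OF n'] dKy_eval[OF n'] sum_dl0'[OF n'] M_def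
      by (simp add: sum_distrib_left)
    then show ?thesis unfolding k_def B_def using h by (simp add: field_simps)
  qed
  have G2y: "G2y hbar mu g N l x y n = - lam * (Yn n + Zn n)" if n: "n < M" for n
  proof -
    have n': "n < N - l" using n M_def by simp
    have "G2y hbar mu g N l x y n = g/(2*hbar) * (- (mu^2/2) * (\<Sum>m<M. is2 mu (y n - y m)))
        - g/hbar * ((mu^2/4) * (\<Sum>m<N. ic2 mu (x m - y n)))"
      unfolding G2y_def d2W_eval[OF n'] d2Ky_eval[OF n'] M_def
      by (simp add: sum_distrib_left)
    then show ?thesis unfolding lam_def Yn_def Zn_def using h by (simp add: field_simps)
  qed
  define E where "E = (\<Sum>j<N. (A j)\<^sup>2)"
  define F where "F = (\<Sum>n<M. (B n)\<^sup>2)"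
  define X where "X = (\<Sum>j<N. Xj j)"
  define Y where "Y = (\<Sum>n<M. Yn n)"
  define Z where "Z = (\<Sum>j<N. Zj j)"
  have ZZ: "(\<Sum>n<M. Zn n) = Z" unfolding Z_def Zn_def Zj_def by (rule sum.swap)
  have Vx: "(\<Sum>j<N. \<Sum>l\<in>{Suc j..<N}. mu ^ 2 / (4 * (sinh (mu * (x j - x l) / 2)) ^ 2)) = (mu^2/8) * X"
  proof -
    have "X = (\<Sum>j<N. \<Sum>k\<in>{Suc j..<N}. is2 mu (x j - x k) + is2 mu (x k - x j)) + (\<Sum>j<N. is2 mu (x j - x j))"
      unfolding X_def Xj_def by (rule pairsum_sym)
    also have "\<dots> = 2 * (\<Sum>j<N. \<Sum>k\<in>{Suc j..<N}. is2 mu (x j - x k))"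
      by (simp add: is2_even[of mu "x _" "x _"] sum_distrib_left)
    finally have "X = 2 * (\<Sum>j<N. \<Sum>k\<in>{Suc j..<N}. is2 mu (x j - x k))" .
    then show ?thesis by (simp add: is2_def sum_distrib_left)
  qed
  have Vy: "(\<Sum>j<M. \<Sum>l\<in>{Suc j..<M}. mu ^ 2 / (4 * (sinh (mu * (y j - y l) / 2)) ^ 2)) = (mu^2/8) * Y"
  proof -
    have "Y = (\<Sum>j<M. \<Sum>k\<in>{Suc j..<M}. is2 mu (y j - y k) + is2 mu (y k - y j)) + (\<Sum>j<M. is2 mu (y j - y j))"
      unfolding Y_def Yn_def by (rule pairsum_sym)
    also have "\<dots> = 2 * (\<Sum>j<M. \<Sum>k\<in>{Suc j..<M}. is2 mu (y j - y k))"
      by (simp add: is2_even[of mu "y _" "y _"] sum_distrib_left)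
    finally have "Y = 2 * (\<Sum>j<M. \<Sum>k\<in>{Suc j..<M}. is2 mu (y j - y k))" .
    then show ?thesis by (simp add: is2_def sum_distrib_left)
  qed
  have Sx: "(\<Sum>j<N. partial2 (\<lambda>x'. Psi_nr hbar mu g N l x' y) x j) = P * (k^2 * E - lam * (X + Z))"
  proof -
    have "(\<Sum>j<N. partial2 (\<lambda>x'. Psi_nr hbar mu g N l x' y) x j) = (\<Sum>j<N. P * (k^2 * (A j)\<^sup>2 - lam * Xj j - lam * Zj j))"
      by (rule sum.cong[OF refl]) (simp add: partial2_x[OF mu ix iy] G1x G2x P_def power_mult_distrib algebra_simps)
    also have "\<dots> = P * (k^2 * E - lam * (X + Z))"
      unfolding E_def X_def Z_def by (simp add: sum_distrib_left sum_subtractf algebra_simps sum.distrib)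
    finally show ?thesis .
  qed
  have Sy: "(\<Sum>n<M. partial2 (\<lambda>y'. Psi_nr hbar mu g N l x y') y n) = P * (k^2 * F - lam * (Y + Z))"
  proof -
    have "(\<Sum>n<M. partial2 (\<lambda>y'. Psi_nr hbar mu g N l x y') y n) = (\<Sum>n<M. P * (k^2 * (B n)\<^sup>2 - lam * Yn n - lam * Zn n))"
      by (rule sum.cong[OF refl]) (simp add: partial2_y[OF mu ix iy] G1y G2y P_def power_mult_distrib algebra_simps M_def)
    also have "\<dots> = P * (k^2 * F - lam * (Y + Z))"
      unfolding F_def Y_def ZZ[symmetric] by (simp add: sum_distrib_left sum_subtractf algebra_simps sum.distrib)
    finally show ?thesis .
  qed
  have core: "- (1/2) * E + (1/2) * F + (1/2) * X - (1/2) * Y = - (real l * (4 * (real l)\<^sup>2 - 1)) / 6"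
    unfolding E_def F_def X_def Y_def A_def B_def Xj_def Yn_def
    apply (rule core_abstract[where C="\<lambda>j k. cth mu (x j - x k)" and D="\<lambda>j k. cth mu (y j - y k)"
        and T="\<lambda>j n. th mu (x j - y n)" and Sx="\<lambda>j k. is2 mu (x j - x k)" and Sy="\<lambda>j k. is2 mu (y j - y k)"])
    subgoal using assms(4) M_def by simp
    subgoal by (rule cth_odd)
    subgoal by (rule cth_odd)
    subgoal by (rule C_3[OF mu ix])
    subgoal unfolding M_def by (rule C_3[OF mu iy])
    subgoal by (rule C_S[OF mu ix])
    subgoal unfolding M_def by (rule C_S[OF mu iy])
    subgoal by (rule T_x[OF mu ix])
    subgoal unfolding M_def by (rule T_y[OF mu iy])
    done
  show ?thesis
    unfolding H_nr_def Sx M_def[symmetric] Sy Vx Vy P_def[symmetric]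
    unfolding k_def lam_def
    by (rule final_alg[OF h core])
qed


end
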